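(* Let $V$ be a real vector space, let $F$ be a geometric mean closed vector lattice, let $T\colon V\times V\to F$ be a vector semi-inner product, and let $u\in F^+$. Define $\|x\|^T_u:=T(x,x)\boxtimes u$ for $x\in V$. If $x,y\in V$ satisfy $T(x,y)=0$, then \[ \|x+y\|^T_u=\|x\|^T_u\boxplus\|y\|^T_u. \]
   Context: All vector spaces are over $\mathbb{R}$ and all vector lattices are Archimedean; $F^+=\{x\in F:x\ge0\}$. A vector lattice $F$ is geometric mean closed if $\inf\{\theta u+\theta^{-1}v:\theta\in(0,\infty)\}$ exists in $F$ for all $u,v\in F^+$, and then $u\boxtimes v:=2^{-1}\inf\{\theta u+\theta^{-1}v:\theta\in(0,\infty)\}$. For $u,v\in F$, $u\boxplus v:=\sup\{(\cos\theta)u+(\sin\theta)v:\theta\in[0,2\pi]\}$; this supremum exists in every geometric mean closed vector lattice. A map $T\colon V\times V\to F$ is a vector semi-inner product if it is bilinear, symmetric ($T(x,y)=T(y,x)$), and satisfies $T(x,x)\ge 0$ for all $x\in V$. *)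

theory Defs
  imports "HOL-Analysis.Analysis"
begin

text \<open>Vector lattices are modelled by the type class constraint
  ordered_real_vector + lattice (a Riesz space); Archimedean property stated explicitly.\<close>

definition archimedean_vl :: "'f::{ordered_real_vector,lattice} itself \<Rightarrow> bool" where
  "archimedean_vl _ \<longleftrightarrow>
     (\<forall>x y :: 'f. 0 \<le> x \<and> (\<forall>n::nat. real n *\<^sub>R x \<le> y) \<longrightarrow> x = 0)"

definition is_inf_of :: "'f::order set \<Rightarrow> 'f \<Rightarrow> bool" where
  "is_inf_of S a \<longleftrightarrow> (\<forall>s\<in>S. a \<le> s) \<and> (\<forall>b. (\<forall>s\<in>S. b \<le> s) \<longrightarrow> b \<le> a)"

definition is_sup_of :: "'f::order set \<Rightarrow> 'f \<Rightarrow> bool" where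
  "is_sup_of S a \<longleftrightarrow> (\<forall>s\<in>S. s \<le> a) \<and> (\<forall>b. (\<forall>s\<in>S. s \<le> b) \<longrightarrow> a \<le> b)"

definition gm_set :: "'f::real_vector \<Rightarrow> 'f \<Rightarrow> 'f set" where
  "gm_set u v = {\<theta> *\<^sub>R u + inverse \<theta> *\<^sub>R v | \<theta>::real. 0 < \<theta>}"

definition geometric_mean_closed :: "'f::{ordered_real_vector,lattice} itself \<Rightarrow> bool" where
  "geometric_mean_closed _ \<longleftrightarrow>
     (\<forall>u v :: 'f. 0 \<le> u \<and> 0 \<le> v \<longrightarrow> (\<exists>a. is_inf_of (gm_set u v) a))"

definition gmean :: "'f::{ordered_real_vector,lattice} \<Rightarrow> 'f \<Rightarrow> 'f" where
  "gmean u v = (1/2) *\<^sub>R (THE a. is_inf_of (gm_set u v) a)"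

definition pyth_sum :: "'f::{ordered_real_vector,lattice} \<Rightarrow> 'f \<Rightarrow> 'f" where
  "pyth_sum u v =
     (THE a. is_sup_of {cos \<theta> *\<^sub>R u + sin \<theta> *\<^sub>R v | \<theta>::real. \<theta> \<in> {0..2*pi}} a)"

definition vector_semi_inner_product ::
  "('v::real_vector \<Rightarrow> 'v \<Rightarrow> 'f::{ordered_real_vector,lattice}) \<Rightarrow> bool" where
  "vector_semi_inner_product T \<longleftrightarrow>
     (\<forall>x. linear (T x)) \<and> (\<forall>y. linear (\<lambda>x. T x y)) \<and>
     (\<forall>x y. T x y = T y x) \<and> (\<forall>x. 0 \<le> T x x)"

definition T_norm :: "('v \<Rightarrow> 'v \<Rightarrow> 'f::{ordered_real_vector,lattice}) \<Rightarrow> 'f \<Rightarrow> 'v \<Rightarrow> 'f" where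
  "T_norm T u x = gmean (T x x) u"

end

theory Submission
  imports Defs
begin

definition pp :: "'f::{ordered_ab_group_add,lattice} \<Rightarrow> 'f" where "pp a = sup a 0"
definition nn :: "'f::{ordered_ab_group_add,lattice} \<Rightarrow> 'f" where "nn a = sup (-a) 0"
definition labs :: "'f::{ordered_ab_group_add,lattice} \<Rightarrow> 'f" where "labs a = pp a + nn a"

lemma add_sup_l: fixes a b c :: "'f::{ordered_ab_group_add,lattice}"
  shows "a + sup b c = sup (a+b) (a+c)"
proof (rule antisym)
  have "b \<le> sup (a+b) (a+c) - a" by (simp add: le_diff_eq add.commute)
  moreover have "c \<le> sup (a+b) (a+c) - a" by (simp add: le_diff_eq add.commute)
  ultimately have "sup b c \<le> sup (a+b) (a+c) - a" by simp
  then show "a + sup b c \<le> sup (a+b) (a+c)" by (simp add: le_diff_eq add.commute)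
  show "sup (a+b) (a+c) \<le> a + sup b c" by (simp add: add_left_mono)
qed

lemma add_inf_l: fixes a b c :: "'f::{ordered_ab_group_add,lattice}"
  shows "a + inf b c = inf (a+b) (a+c)"
proof (rule antisym)
  have "inf (a+b) (a+c) - a \<le> b" by (simp add: diff_le_eq add.commute)
  moreover have "inf (a+b) (a+c) - a \<le> c" by (simp add: diff_le_eq add.commute)
  ultimately have "inf (a+b) (a+c) - a \<le> inf b c" by simp
  then show "inf (a+b) (a+c) \<le> a + inf b c" by (metis add.commute diff_le_eq)
  show "a + inf b c \<le> inf (a+b) (a+c)" by (simp add: add_left_mono)
qed

lemma neg_sup: fixes a b :: "'f::{ordered_ab_group_add,lattice}"
  shows "- sup a b = inf (-a) (-b)"
proof (rule antisym)
  show "- sup a b \<le> inf (-a) (-b)" by simp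
  have "inf (-a) (-b) \<le> -a" "inf (-a) (-b) \<le> -b" by simp_all
  then have "a \<le> - inf (-a) (-b)" "b \<le> - inf (-a) (-b)" by (metis minus_minus neg_le_iff_le)+
  then have "sup a b \<le> - inf (-a) (-b)" by simp
  then show "inf (-a) (-b) \<le> - sup a b" by (metis minus_minus neg_le_iff_le)
qed

lemma inf_plus_sup: fixes a b :: "'f::{ordered_ab_group_add,lattice}"
  shows "inf a b + sup a b = a + b"
proof -
  have "a + b - sup a b = a + b + inf (-a) (-b)" by (simp add: neg_sup[symmetric])
  also have "\<dots> = inf b a" by (simp add: add_inf_l)
  finally show ?thesis by (simp add: algebra_simps inf_commute)
qed

lemma pp_nn_inf: fixes a :: "'f::{ordered_ab_group_add,lattice}"
  shows "inf (pp a) (nn a) = 0"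
proof -
  have "pp a + nn a = sup a 0 + sup (-a) 0" unfolding pp_def nn_def ..
  also have "\<dots> = sup (sup a 0 + -a) (sup a 0 + 0)" by (rule add_sup_l)
  also have "sup a 0 + -a = sup (-a) 0"
    using add_sup_l[of "-a" a 0] by (simp add: add.commute sup_commute)
  finally have ppnn: "pp a + nn a = sup (sup a 0) (sup (-a) 0)" by (simp add: sup_commute)
  then have "inf (pp a) (nn a) = (pp a + nn a) - sup (pp a) (nn a)"
    using inf_plus_sup[of "pp a" "nn a"] by (simp add: algebra_simps)
  also have "\<dots> = 0" using ppnn unfolding pp_def nn_def by simp
  finally show ?thesis .
qed

lemma pp_ge0: "0 \<le> pp a" by (simp add: pp_def)
lemma nn_ge0: "0 \<le> nn a" by (simp add: nn_def)
lemma pp_ge: "a \<le> pp a" by (simp add: pp_def)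
lemma nn_ge: "- a \<le> nn a" by (simp add: nn_def)
lemma pp_minus_nn: fixes a :: "'f::{ordered_ab_group_add,lattice}" shows "pp a - nn a = a"
proof -
  have "sup a 0 - sup (-a) 0 = sup a 0 + inf a 0" by (simp add: neg_sup)
  also have "\<dots> = a" using inf_plus_sup[of a 0] by (simp add: add.commute)
  finally show ?thesis by (simp add: pp_def nn_def)
qed
lemma pp_sub: fixes a b :: "'f::{ordered_ab_group_add,lattice}" shows "pp (a+b) \<le> pp a + pp b"
  unfolding pp_def by (simp add: add_mono add_nonneg_nonneg)
lemma pp_mono: fixes a b :: "'f::{ordered_ab_group_add,lattice}" shows "a \<le> b \<Longrightarrow> pp a \<le> pp b"
  unfolding pp_def by (auto intro: le_supI1)
lemma nn_pp: "nn a = pp (-a)" by (simp add: pp_def nn_def)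
lemma labs_ge0: "0 \<le> labs a" by (simp add: labs_def pp_ge0 nn_ge0 add_nonneg_nonneg)

lemma pp_nonneg_id: "0 \<le> a \<Longrightarrow> pp a = a" by (simp add: pp_def sup_absorb1)

lemma step_lemma: fixes c d g z :: "'f::{ordered_ab_group_add,lattice}"
  assumes "0 \<le> d" "d \<le> c" "z \<le> c + nn g" "z \<le> labs (g + d)"
  shows "z \<le> c + nn (g + d)"
proof -
  define e where "e = g + d"
  define r where "r = d - pp e"
  have "d - e = r + nn e" using pp_minus_nn[of e] unfolding r_def by (simp add: algebra_simps)
  have "nn g = pp (d - e)" unfolding nn_pp e_def by (simp add: algebra_simps)
  also have "\<dots> \<le> pp r + pp (nn e)" using \<open>d - e = r + nn e\<close> pp_sub by metis
  also have "pp (nn e) = nn e" using nn_ge0 pp_nonneg_id by blast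
  finally have ng: "nn g \<le> pp r + nn e" .
  have z1: "z - nn e \<le> pp e" using assms(4) unfolding labs_def e_def by (simp add: diff_le_eq)
  have z2: "z - nn e \<le> c + pp r" using assms(3) ng by (simp add: diff_le_eq add_ac) (metis add_left_mono order_trans add.assoc)
  have "pp e = d - r" unfolding r_def by simp
  have "inf (pp e) (c + pp r) = c + inf (d - c - r) (pp r)"
    unfolding \<open>pp e = d - r\<close> add_inf_l by (simp add: algebra_simps)
  also have "inf (d - c - r) (pp r) \<le> inf (nn r) (pp r)"
  proof -
    have "d - c - r \<le> - r" using assms(2) by simp
    also have "\<dots> \<le> nn r" by (rule nn_ge)
    finally show ?thesis by (simp add: le_infI1)
  qed
  also have "inf (nn r) (pp r) = 0" using pp_nn_inf[of r] by (simp add: inf_commute)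
  finally have "inf (pp e) (c + pp r) \<le> c" by simp
  moreover have "z - nn e \<le> inf (pp e) (c + pp r)" using z1 z2 by simp
  ultimately have "z - nn e \<le> c" by (rule order_trans[rotated])
  then show ?thesis unfolding e_def by (simp add: diff_le_eq add.commute)
qed

lemma crossing: fixes g :: "nat \<Rightarrow> 'f::{ordered_ab_group_add,lattice}"
  assumes "\<And>k. k < n \<Longrightarrow> g k \<le> g (Suc k) \<and> g (Suc k) - g k \<le> D"
    and "\<And>k. k \<le> n \<Longrightarrow> z \<le> labs (g k)" and "0 \<le> D"
  shows "z \<le> D + pp (g 0) + nn (g n)"
  using assms
proof (induction n)
  case 0
  then have "z \<le> pp (g 0) + nn (g 0)" unfolding labs_def by auto
  also have "\<dots> \<le> D + pp (g 0) + nn (g 0)" using \<open>0 \<le> D\<close> by (simp add: add_increasing)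
  finally show ?case .
next
  case (Suc n)
  have IH: "z \<le> (D + pp (g 0)) + nn (g n)" using Suc by auto
  define d where "d = g (Suc n) - g n"
  have d0: "0 \<le> d" using Suc.prems(1)[of n] unfolding d_def by simp
  have dc: "d \<le> D + pp (g 0)" using Suc.prems(1)[of n] pp_ge0[of "g 0"] unfolding d_def
    by (meson add_increasing2 lessI)
  have "z \<le> labs (g n + d)" using Suc.prems(2)[of "Suc n"] unfolding d_def by simp
  from step_lemma[OF d0 dc IH this] show ?case unfolding d_def by (simp add: add.assoc)
qed

lemma arch_zero: fixes z E :: "'f::{ordered_real_vector,lattice}"
  assumes "archimedean_vl TYPE('f)" "0 \<le> z" "0 \<le> E"
    and "\<And>N::nat. N \<ge> 1 \<Longrightarrow> z \<le> (1 / real N) *\<^sub>R E"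
  shows "z = 0"
proof -
  have "\<forall>n::nat. real n *\<^sub>R z \<le> E"
  proof
    fix n :: nat
    show "real n *\<^sub>R z \<le> E"
    proof (cases "n = 0")
      case True then show ?thesis using assms by simp
    next
      case False
      then have "z \<le> (1 / real n) *\<^sub>R E" using assms(4) by simp
      then have "real n *\<^sub>R z \<le> real n *\<^sub>R ((1 / real n) *\<^sub>R E)" by (rule scaleR_left_mono) simp
      also have "\<dots> = E" using False by simp
      finally show ?thesis .
    qed
  qed
  then show ?thesis using assms(1,2) unfolding archimedean_vl_def by blast
qed

lemma inf_sum_lower: fixes x a b c d :: "'f::{ordered_ab_group_add,lattice}"
  assumes "x \<le> a + c" "x \<le> a + d" "x \<le> b + c" "x \<le> b + d"
  shows "x \<le> inf a b + inf c d"
proof -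
  have "inf a b + inf c d = inf (inf a b + c) (inf a b + d)" by (rule add_inf_l)
  also have "inf a b + c = inf (a + c) (b + c)" using add_inf_l[of c a b] by (simp add: add.commute)
  also have "inf a b + d = inf (a + d) (b + d)" using add_inf_l[of d a b] by (simp add: add.commute)
  finally show ?thesis using assms by simp
qed

lemma pp_zero_le: fixes a :: "'f::{ordered_ab_group_add,lattice}" shows "pp a = 0 \<Longrightarrow> a \<le> 0"
  using pp_ge[of a] by simp

lemma pp_nonpos: fixes a :: "'f::{ordered_ab_group_add,lattice}" shows "a \<le> 0 \<Longrightarrow> pp a = 0"
  by (simp add: pp_def sup_absorb2)

lemma lemma_H: fixes X Y U w :: "'f::{ordered_real_vector,lattice}"
  assumes arch: "archimedean_vl TYPE('f)" and X: "0 \<le> X" and Y: "0 \<le> Y" and U: "0 \<le> U"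
    and hw: "\<And>l. 0 \<le> l \<Longrightarrow> l \<le> 1 \<Longrightarrow> inf X (l *\<^sub>R U) + inf Y ((1 - l) *\<^sub>R U) \<le> w"
  shows "inf (X + Y) U \<le> w"
proof -
  define v where "v = inf (X + Y) U"
  define g where "g l = l *\<^sub>R Y - (1 - l) *\<^sub>R X" for l :: real
  define z where "z = pp (v - w)"
  have zb: "z \<le> labs (g l)" if l0: "0 \<le> l" and l1: "l \<le> 1" for l
  proof -
    have vXY: "v \<le> X + Y" and vU: "v \<le> U" unfolding v_def by simp_all
    have vconv: "v \<le> m *\<^sub>R (X + Y) + (1 - m) *\<^sub>R U" if "0 \<le> m" "m \<le> 1" for m
    proof -
      have "v = m *\<^sub>R v + (1 - m) *\<^sub>R v" by (simp add: algebra_simps)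
      also have "\<dots> \<le> m *\<^sub>R (X + Y) + (1 - m) *\<^sub>R U"
        using vXY vU that by (intro add_mono scaleR_left_mono) auto
      finally show ?thesis .
    qed
    have pl: "pp (g l) \<le> labs (g l)" "nn (g l) \<le> labs (g l)" "0 \<le> labs (g l)"
      unfolding labs_def using pp_ge0[of "g l"] nn_ge0[of "g l"]
      by (auto intro: add_increasing add_increasing2 add_nonneg_nonneg)
    have "v - labs (g l) \<le> inf X (l *\<^sub>R U) + inf Y ((1 - l) *\<^sub>R U)"
    proof (rule inf_sum_lower)
      show "v - labs (g l) \<le> X + Y" using vXY pl(3) by (simp add: diff_le_eq add_increasing2)
      show "v - labs (g l) \<le> l *\<^sub>R U + (1 - l) *\<^sub>R U"
        using vU pl(3) by (simp add: diff_le_eq add_increasing2 scaleR_left_distrib[symmetric])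
      have "v - (X + (1 - l) *\<^sub>R U) \<le> l *\<^sub>R (X + Y) + (1 - l) *\<^sub>R U - (X + (1 - l) *\<^sub>R U)"
        using vconv[OF l0 l1] by (rule diff_right_mono)
      also have "\<dots> = g l" unfolding g_def by (simp add: algebra_simps)
      also have "\<dots> \<le> labs (g l)" using pp_ge[of "g l"] pl(1) by simp
      finally show "v - labs (g l) \<le> X + (1 - l) *\<^sub>R U" by (simp add: algebra_simps)
      have "v - (l *\<^sub>R U + Y) \<le> (1 - l) *\<^sub>R (X + Y) + (1 - (1 - l)) *\<^sub>R U - (l *\<^sub>R U + Y)"
        using vconv[of "1 - l"] l0 l1 by (intro diff_right_mono) auto
      also have "\<dots> = - g l" unfolding g_def by (simp add: algebra_simps)
      also have "\<dots> \<le> labs (g l)" using nn_ge[of "g l"] pl(2) by simp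
      finally show "v - labs (g l) \<le> l *\<^sub>R U + Y" by (simp add: algebra_simps)
    qed
    also have "\<dots> \<le> w" using hw l0 l1 by blast
    finally have "v - w \<le> labs (g l)" by (simp add: algebra_simps)
    then show ?thesis unfolding z_def pp_def using pl(3) by simp
  qed
  have "z = 0"
  proof (rule arch_zero[OF arch])
    show "0 \<le> z" unfolding z_def by (rule pp_ge0)
    show "0 \<le> X + Y" using X Y by simp
    fix N :: nat assume N: "N \<ge> 1"
    define G where "G k = g (real k / real N)" for k :: nat
    have "z \<le> (1 / real N) *\<^sub>R (X + Y) + pp (G 0) + nn (G N)"
    proof (rule crossing)
      fix k assume "k < N"
      have "G (Suc k) - G k = (1 / real N) *\<^sub>R (X + Y)"
      proof -
        have e1: "real (Suc k) / real N - real k / real N = 1 / real N" by (simp add: diff_divide_distrib[symmetric])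
        have e2: "(1 - real k / real N) - (1 - real (Suc k) / real N) = 1 / real N" by (simp add: diff_divide_distrib[symmetric])
        have "G (Suc k) - G k = (real (Suc k) / real N - real k / real N) *\<^sub>R Y
              + ((1 - real k / real N) - (1 - real (Suc k) / real N)) *\<^sub>R X"
          unfolding G_def g_def by (simp add: scaleR_diff_left)
        then show ?thesis unfolding e1 e2 by (simp add: scaleR_add_right add.commute)
      qed
      then show "G k \<le> G (Suc k) \<and> G (Suc k) - G k \<le> (1 / real N) *\<^sub>R (X + Y)"
      proof -
        have "0 \<le> (1 / real N) *\<^sub>R (X + Y)" using X Y by (intro scaleR_nonneg_nonneg add_nonneg_nonneg) simp_all
        then have "0 \<le> G (Suc k) - G k" using \<open>G (Suc k) - G k = _\<close> by (simp only:)
        then have "G k \<le> G (Suc k)" by (simp only: diff_ge_0_iff_ge)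
        then show ?thesis using \<open>G (Suc k) - G k = _\<close> by simp
      qed
    next
      fix k assume "k \<le> N"
      then show "z \<le> labs (G k)" unfolding G_def using N by (intro zb) auto
    next
      show "0 \<le> (1 / real N) *\<^sub>R (X + Y)" using X Y by (intro scaleR_nonneg_nonneg add_nonneg_nonneg) simp_all
    qed
    moreover have "pp (G 0) = 0" unfolding G_def g_def using X by (simp add: pp_nonpos)
    moreover have "nn (G N) = 0" unfolding G_def g_def nn_pp using Y N by (simp add: pp_nonpos)
    ultimately show "z \<le> (1 / real N) *\<^sub>R (X + Y)" by simp
  qed
  then show ?thesis unfolding z_def v_def using pp_zero_le by fastforce
qed


lemma diff_inf_pp: fixes a b :: "'f::{ordered_ab_group_add,lattice}"
  shows "a - inf a b = pp (a - b)"
proof -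
  have "- inf a b = sup (-a) (-b)" using neg_sup[of "-a" "-b"] by (metis minus_minus)
  then have "a - inf a b = a + sup (-a) (-b)" by simp
  also have "\<dots> = sup 0 (a - b)" by (simp add: add_sup_l)
  finally show ?thesis by (simp add: pp_def sup_commute)
qed

lemma sum_minus_inf: fixes a b :: "'f::{ordered_ab_group_add,lattice}"
  shows "a + b - (inf a b + inf a b) = labs (a - b)"
proof -
  have "a + b - (inf a b + inf a b) = (a - inf a b) + (b - inf b a)" by (simp add: algebra_simps inf_commute)
  also have "\<dots> = pp (a - b) + pp (b - a)" by (simp add: diff_inf_pp)
  finally show ?thesis by (simp add: labs_def nn_pp)
qed

lemma grid_real: fixes N :: nat and k :: nat and t :: "nat \<Rightarrow> real"
  assumes N: "N \<ge> 1"
  and t_def: "t = (\<lambda>k::nat. 1 / real N + real k / real N ^ 3)"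
  shows "t (Suc k) - t k = 1 / real N ^ 3" "1 / real N ^ 3 \<le> 1 / real N"
    "0 \<le> inverse (t k) - inverse (t (Suc k))" "inverse (t k) - inverse (t (Suc k)) \<le> 1 / real N"
    "t k \<ge> 1 / real N" "t 0 = 1 / real N" "inverse (t (N^4)) \<le> 1 / real N"
proof -
  have Np: "real N \<ge> 1" using N by simp
  show e: "t (Suc k) - t k = 1 / real N ^ 3" unfolding t_def by (simp add: add_divide_distrib)
  show "1 / real N ^ 3 \<le> 1 / real N" using Np
  proof (intro divide_left_mono)
    have "1 \<le> real N * real N" using Np mult_mono[of 1 "real N" 1 "real N"] by simp
    then have "real N * 1 \<le> real N * (real N * real N)" using Np by (intro mult_left_mono) auto
    then show "real N \<le> real N ^ 3" by (simp add: power3_eq_cube)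
  qed (use Np in auto)
  have tk: "t j \<ge> 1 / real N" for j unfolding t_def by simp
  then show "t k \<ge> 1 / real N" .
  have tpos: "t j > 0" for j using tk[of j] Np by (meson less_le_trans divide_pos_pos zero_less_one less_le_trans[of 0 1] order_less_le_trans)
  have "t k \<le> t (Suc k)" using e Np by (simp add: algebra_simps)
  then show "0 \<le> inverse (t k) - inverse (t (Suc k))" using tpos by (simp add: le_imp_inverse_le)
  have "inverse (t k) - inverse (t (Suc k)) = (t (Suc k) - t k) / (t k * t (Suc k))"
    using tpos[of k] tpos[of "Suc k"] by (simp add: field_simps)
  also have "\<dots> = (1 / real N ^ 3) / (t k * t (Suc k))" using e by simp
  also have "\<dots> \<le> (1 / real N ^ 3) / ((1 / real N) * (1 / real N))"
    using tk[of k] tk[of "Suc k"] Np tpos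
    by (intro divide_left_mono mult_mono) (auto simp: less_imp_le)
  also have "\<dots> = 1 / real N" using Np by (simp add: field_simps power3_eq_cube)
  finally show "inverse (t k) - inverse (t (Suc k)) \<le> 1 / real N" .
  show "t 0 = 1 / real N" unfolding t_def by simp
  have "t (N^4) = 1 / real N + real N" unfolding t_def using Np by (simp add: field_simps power3_eq_cube power4_eq_xxxx)
  then have "t (N^4) \<ge> real N" by simp
  then show "inverse (t (N^4)) \<le> 1 / real N" using Np by (simp add: inverse_eq_divide divide_left_mono)
qed


lemma lemma_G: fixes x u w M :: "'f::{ordered_real_vector,lattice}"
  assumes arch: "archimedean_vl TYPE('f)" and x: "0 \<le> x" and u: "0 \<le> u"
    and M: "is_inf_of (gm_set x u) M"
    and hw: "\<And>\<theta>. 0 < \<theta> \<Longrightarrow> inf (\<theta> *\<^sub>R x) (inverse \<theta> *\<^sub>R u) \<le> w"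
  shows "M \<le> w + w"
proof -
  define g where "g th = th *\<^sub>R x - inverse th *\<^sub>R u" for th :: real
  define z where "z = pp (M - (w + w))"
  have zb: "z \<le> labs (g th)" if th: "0 < th" for th
  proof -
    have "th *\<^sub>R x + inverse th *\<^sub>R u \<in> gm_set x u" unfolding gm_set_def using th by blast
    then have M1: "M \<le> th *\<^sub>R x + inverse th *\<^sub>R u" using M unfolding is_inf_of_def by blast
    have "M - (w + w) \<le> th *\<^sub>R x + inverse th *\<^sub>R u -
        (inf (th *\<^sub>R x) (inverse th *\<^sub>R u) + inf (th *\<^sub>R x) (inverse th *\<^sub>R u))"
      using M1 hw[OF th] by (intro diff_mono add_mono) auto
    also have "\<dots> = labs (g th)" unfolding g_def by (rule sum_minus_inf)
    finally show ?thesis unfolding z_def pp_def using labs_ge0 by simp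
  qed
  have "z = 0"
  proof (rule arch_zero[OF arch])
    show "0 \<le> z" unfolding z_def by (rule pp_ge0)
    show "0 \<le> (x + u) + (x + u)" using x u by simp
    fix N :: nat assume N: "N \<ge> 1"
    define t where "t = (\<lambda>k::nat. 1 / real N + real k / real N ^ 3)"
    note gr = grid_real[OF N t_def]
    have Npos: "1 / real N > 0" using N by simp
    have tpos: "t k > 0" for k using gr(5)[of k] Npos by linarith
    define G where "G k = g (t k)" for k
    define D where "D = (1 / real N) *\<^sub>R (x + u)"
    have "z \<le> D + pp (G 0) + nn (G (N^4))"
    proof (rule crossing)
      fix k assume "k < N^4"
      have eq: "G (Suc k) - G k = (t (Suc k) - t k) *\<^sub>R x + (inverse (t k) - inverse (t (Suc k))) *\<^sub>R u"
        unfolding G_def g_def by (simp add: algebra_simps scaleR_diff_left)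
      have "0 \<le> G (Suc k) - G k" unfolding eq using gr(1,3) x u
        by (intro add_nonneg_nonneg scaleR_nonneg_nonneg) auto
      then have "G k \<le> G (Suc k)" by (simp only: diff_ge_0_iff_ge)
      moreover have "G (Suc k) - G k \<le> D" unfolding eq D_def scaleR_add_right
        using gr(1,2,3,4) x u by (intro add_mono scaleR_right_mono) auto
      ultimately show "G k \<le> G (Suc k) \<and> G (Suc k) - G k \<le> D" by simp
    next
      fix k show "z \<le> labs (G k)" unfolding G_def using tpos by (intro zb)
    next
      show "0 \<le> D" unfolding D_def using x u by (intro scaleR_nonneg_nonneg add_nonneg_nonneg) simp_all
    qed
    moreover have "pp (G 0) \<le> (1 / real N) *\<^sub>R x"
    proof -
      have "0 \<le> inverse (t 0) *\<^sub>R u" using tpos[of 0] u by (intro scaleR_nonneg_nonneg) auto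
      then have "G 0 \<le> t 0 *\<^sub>R x" unfolding G_def g_def by (simp add: algebra_simps del: scaleR_nonneg_nonneg)
      then have "pp (G 0) \<le> pp (t 0 *\<^sub>R x)" by (rule pp_mono)
      also have "\<dots> = t 0 *\<^sub>R x" using tpos[of 0] x by (intro pp_nonneg_id scaleR_nonneg_nonneg) (auto simp: less_imp_le)
      finally show ?thesis using gr(6) by simp
    qed
    moreover have "nn (G (N^4)) \<le> (1 / real N) *\<^sub>R u"
    proof -
      have "0 \<le> t (N^4) *\<^sub>R x" using tpos[of "N^4"] x by (intro scaleR_nonneg_nonneg) auto
      then have "- G (N^4) \<le> inverse (t (N^4)) *\<^sub>R u" unfolding G_def g_def by (simp add: algebra_simps)
      then have "nn (G (N^4)) \<le> pp (inverse (t (N^4)) *\<^sub>R u)" unfolding nn_pp by (rule pp_mono)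
      also have "\<dots> = inverse (t (N^4)) *\<^sub>R u" using tpos[of "N^4"] u by (intro pp_nonneg_id scaleR_nonneg_nonneg) (auto simp: less_imp_le)
      also have "\<dots> \<le> (1 / real N) *\<^sub>R u" using gr(7) u by (rule scaleR_right_mono)
      finally show ?thesis .
    qed
    ultimately have "z \<le> D + (1 / real N) *\<^sub>R x + (1 / real N) *\<^sub>R u"
      by (rule order_trans[OF _ add_mono[OF add_mono[OF order_refl]]])
    also have "\<dots> = (1 / real N) *\<^sub>R ((x + u) + (x + u))" unfolding D_def by (simp add: algebra_simps)
    finally show "z \<le> (1 / real N) *\<^sub>R ((x + u) + (x + u))" .
  qed
  then show ?thesis unfolding z_def using pp_zero_le by fastforce
qed


lemma inf_unique: fixes S :: "'f::order set" shows "is_inf_of S a \<Longrightarrow> is_inf_of S b \<Longrightarrow> a = b"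
  unfolding is_inf_of_def by (meson antisym)
lemma sup_unique: fixes S :: "'f::order set" shows "is_sup_of S a \<Longrightarrow> is_sup_of S b \<Longrightarrow> a = b"
  unfolding is_sup_of_def by (meson antisym)

lemma gm_exists: fixes a u :: "'f::{ordered_real_vector,lattice}"
  assumes "geometric_mean_closed TYPE('f)" "0 \<le> a" "0 \<le> u"
  obtains M where "is_inf_of (gm_set a u) M" "gmean a u = (1/2) *\<^sub>R M"
proof -
  obtain M where M: "is_inf_of (gm_set a u) M" using assms unfolding geometric_mean_closed_def by blast
  have "(THE z. is_inf_of (gm_set a u) z) = M"
    by (rule the_equality) (auto intro: M inf_unique[OF _ M])
  then show ?thesis using that M unfolding gmean_def by simp
qed

lemma gm_nonneg: fixes a u M :: "'f::{ordered_real_vector,lattice}"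
  assumes "0 \<le> a" "0 \<le> u" "is_inf_of (gm_set a u) M" shows "0 \<le> M"
proof -
  have "\<forall>s\<in>gm_set a u. 0 \<le> s" unfolding gm_set_def using assms(1,2)
    by (auto intro!: add_nonneg_nonneg scaleR_nonneg_nonneg)
  then show ?thesis using assms(3) unfolding is_inf_of_def by blast
qed

lemma real_am_gm: fixes p r :: real assumes "0 < p" "0 < r" shows "2 \<le> p / r + r / p"
proof -
  have "p / r + r / p - 2 = (p - r)^2 / (p * r)" using assms by (simp add: field_simps power2_eq_square)
  also have "\<dots> \<ge> 0" using assms by simp
  finally show ?thesis by simp
qed

lemma scaleR_inf: fixes a b :: "'f::{ordered_real_vector,lattice}"
  assumes "0 < c" shows "c *\<^sub>R inf a b = inf (c *\<^sub>R a) (c *\<^sub>R b)"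
proof (rule antisym)
  show "c *\<^sub>R inf a b \<le> inf (c *\<^sub>R a) (c *\<^sub>R b)" using assms by (simp add: scaleR_left_mono)
  have "inverse c *\<^sub>R inf (c *\<^sub>R a) (c *\<^sub>R b) \<le> inverse c *\<^sub>R (c *\<^sub>R a)"
    using assms by (intro scaleR_left_mono) auto
  also have "\<dots> = a" using assms by simp
  finally have h1: "inverse c *\<^sub>R inf (c *\<^sub>R a) (c *\<^sub>R b) \<le> a" .
  have "inverse c *\<^sub>R inf (c *\<^sub>R a) (c *\<^sub>R b) \<le> inverse c *\<^sub>R (c *\<^sub>R b)"
    using assms by (intro scaleR_left_mono) auto
  also have "\<dots> = b" using assms by simp
  finally have "inverse c *\<^sub>R inf (c *\<^sub>R a) (c *\<^sub>R b) \<le> inf a b" using h1 by simp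
  then have "c *\<^sub>R (inverse c *\<^sub>R inf (c *\<^sub>R a) (c *\<^sub>R b)) \<le> c *\<^sub>R inf a b"
    using assms by (intro scaleR_left_mono) auto
  then show "inf (c *\<^sub>R a) (c *\<^sub>R b) \<le> c *\<^sub>R inf a b" using assms by simp
qed

lemma LB: fixes a u M :: "'f::{ordered_real_vector,lattice}"
  assumes a: "0 \<le> a" and u: "0 \<le> u" and M: "is_inf_of (gm_set a u) M" and c: "0 \<le> c" and th: "0 < th"
  shows "inf (th *\<^sub>R a) ((c^2 / th) *\<^sub>R u) \<le> c *\<^sub>R ((1/2) *\<^sub>R M)"
proof (cases "c = 0")
  case True then show ?thesis by simp
next
  case False
  then have cp: "0 < c" using c by simp
  define r where "r = th / c"
  have rp: "0 < r" unfolding r_def using cp th by simp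
  define m where "m = inf (r *\<^sub>R a) (inverse r *\<^sub>R u)"
  have m0: "0 \<le> m" unfolding m_def using a u rp by (auto intro!: scaleR_nonneg_nonneg)
  have "m + m \<le> s" if "s \<in> gm_set a u" for s
  proof -
    have "\<exists>ph. s = ph *\<^sub>R a + inverse ph *\<^sub>R u \<and> 0 < ph" using that unfolding gm_set_def by (simp only: mem_Collect_eq)
    then obtain ph where ph: "0 < ph" and s: "s = ph *\<^sub>R a + inverse ph *\<^sub>R u" by blast
    have "m + m = 2 *\<^sub>R m" by (simp add: scaleR_2)
    also have "\<dots> \<le> (ph / r + r / ph) *\<^sub>R m" using real_am_gm[OF ph rp] m0 by (rule scaleR_right_mono)
    also have "\<dots> = (ph / r) *\<^sub>R m + (r / ph) *\<^sub>R m" by (simp add: scaleR_left_distrib)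
    also have "\<dots> \<le> (ph / r) *\<^sub>R (r *\<^sub>R a) + (r / ph) *\<^sub>R (inverse r *\<^sub>R u)"
      unfolding m_def using ph rp by (intro add_mono scaleR_left_mono) auto
    also have "\<dots> = s" unfolding s using ph rp by (simp add: field_simps)
    finally show ?thesis .
  qed
  then have "m + m \<le> M" using M unfolding is_inf_of_def by blast
  then have "(1/2) *\<^sub>R (m + m) \<le> (1/2) *\<^sub>R M" by (rule scaleR_left_mono) simp
  moreover have "(1/2) *\<^sub>R (m + m) = m" by (simp add: scaleR_2[symmetric])
  ultimately have mM: "m \<le> (1/2) *\<^sub>R M" by simp
  have "inf (th *\<^sub>R a) ((c^2 / th) *\<^sub>R u) = c *\<^sub>R m"
    unfolding m_def scaleR_inf[OF cp] r_def using cp th by (simp add: field_simps power2_eq_square)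
  also have "\<dots> \<le> c *\<^sub>R ((1/2) *\<^sub>R M)" using mM c by (rule scaleR_left_mono)
  finally show ?thesis .
qed

lemma UB1: fixes a u M :: "'f::{ordered_real_vector,lattice}"
  assumes a: "0 \<le> a" and u: "0 \<le> u" and M: "is_inf_of (gm_set a u) M" and c: "0 \<le> c" and th: "0 < th"
  shows "c *\<^sub>R M \<le> th *\<^sub>R a + (c^2 / th) *\<^sub>R u"
proof (cases "c = 0")
  case True then show ?thesis using a u th by (auto intro!: add_nonneg_nonneg scaleR_nonneg_nonneg)
next
  case False
  then have cp: "0 < c" using c by simp
  have "0 < th / c" using cp th by simp
  then have "(th / c) *\<^sub>R a + inverse (th / c) *\<^sub>R u \<in> gm_set a u" unfolding gm_set_def by blast
  then have "M \<le> (th / c) *\<^sub>R a + inverse (th / c) *\<^sub>R u" using M unfolding is_inf_of_def by blast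
  then have "c *\<^sub>R M \<le> c *\<^sub>R ((th / c) *\<^sub>R a + inverse (th / c) *\<^sub>R u)" using c by (rule scaleR_left_mono)
  also have "\<dots> = th *\<^sub>R a + (c^2 / th) *\<^sub>R u" using cp th by (simp add: scaleR_add_right field_simps power2_eq_square)
  finally show ?thesis .
qed



theorem theorem3p7:
  fixes T :: "'v::real_vector \<Rightarrow> 'v \<Rightarrow> 'f::{ordered_real_vector,lattice}"
    and u :: 'f and x y :: 'v
  assumes "archimedean_vl TYPE('f)"
    and "geometric_mean_closed TYPE('f)"
    and "vector_semi_inner_product T"
    and "0 \<le> u"
    and "T x y = 0"
  shows "T_norm T u (x + y) = pyth_sum (T_norm T u x) (T_norm T u y)"
proof -
  note arch = assms(1) and gmc = assms(2) and u = assms(4)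
  have lin1: "\<And>x. linear (T x)" and lin2: "\<And>y. linear (\<lambda>x. T x y)" and sym: "\<And>x y. T x y = T y x"
    and pos: "\<And>x. 0 \<le> T x x" using assms(3) unfolding vector_semi_inner_product_def by auto
  define A where "A = T x x"
  define B where "B = T y y"
  have A: "0 \<le> A" and B: "0 \<le> B" unfolding A_def B_def by (simp_all add: pos)
  have Txy: "T (x + y) (x + y) = A + B"
  proof -
    have "T (x + y) (x + y) = T x (x + y) + T y (x + y)" using linear_add[OF lin2[of "x + y"]] by simp
    also have "\<dots> = T x x + T x y + (T y x + T y y)" using linear_add[OF lin1[of x]] linear_add[OF lin1[of y]] by simp
    finally show ?thesis unfolding A_def B_def using assms(5) sym[of y x] by simp
  qed
  obtain Ma where Ma: "is_inf_of (gm_set A u) Ma" and pa: "gmean A u = (1/2) *\<^sub>R Ma" using gm_exists[OF gmc A u] by blast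
  obtain Mb where Mb: "is_inf_of (gm_set B u) Mb" and pb: "gmean B u = (1/2) *\<^sub>R Mb" using gm_exists[OF gmc B u] by blast
  have AB: "0 \<le> A + B" using A B by simp
  obtain Ms where Ms: "is_inf_of (gm_set (A + B) u) Ms" and ps: "gmean (A + B) u = (1/2) *\<^sub>R Ms" using gm_exists[OF gmc AB u] by blast
  define p where "p = (1/2) *\<^sub>R Ma"
  define q where "q = (1/2) *\<^sub>R Mb"
  define s where "s = (1/2) *\<^sub>R Ms"
  have p0: "0 \<le> p" unfolding p_def using gm_nonneg[OF A u Ma] by (intro scaleR_nonneg_nonneg) simp_all
  have q0: "0 \<le> q" unfolding q_def using gm_nonneg[OF B u Mb] by (intro scaleR_nonneg_nonneg) simp_all
  define S where "S = {cos \<theta> *\<^sub>R p + sin \<theta> *\<^sub>R q | \<theta>::real. \<theta> \<in> {0..2*pi}}"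
  have sup: "is_sup_of S s"
    unfolding is_sup_of_def
  proof (intro conjI allI ballI impI)
    fix e assume "e \<in> S"
    then obtain t where e: "e = cos t *\<^sub>R p + sin t *\<^sub>R q" unfolding S_def by blast
    define c where "c = \<bar>cos t\<bar>"
    define d where "d = \<bar>sin t\<bar>"
    have c0: "0 \<le> c" and d0: "0 \<le> d" unfolding c_def d_def by simp_all
    have cd: "c^2 + d^2 = 1" unfolding c_def d_def by simp
    have "e \<le> c *\<^sub>R p + d *\<^sub>R q" unfolding e c_def d_def using p0 q0
      by (intro add_mono scaleR_right_mono) auto
    also have "c *\<^sub>R p + d *\<^sub>R q \<le> s"
    proof -
      have "(c *\<^sub>R Ma + d *\<^sub>R Mb) \<le> z" if "z \<in> gm_set (A + B) u" for z
      proof -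
        have "\<exists>th. z = th *\<^sub>R (A + B) + inverse th *\<^sub>R u \<and> 0 < th" using that unfolding gm_set_def by (simp only: mem_Collect_eq)
        then obtain th where th: "0 < th" and z: "z = th *\<^sub>R (A + B) + inverse th *\<^sub>R u" by blast
        have "c *\<^sub>R Ma + d *\<^sub>R Mb \<le> (th *\<^sub>R A + (c^2 / th) *\<^sub>R u) + (th *\<^sub>R B + (d^2 / th) *\<^sub>R u)"
          using UB1[OF A u Ma c0 th] UB1[OF B u Mb d0 th] by (rule add_mono)
        also have "\<dots> = th *\<^sub>R (A + B) + ((c^2 + d^2) / th) *\<^sub>R u"
          by (simp add: scaleR_add_right add_divide_distrib scaleR_add_left algebra_simps)
        also have "\<dots> = z" unfolding z cd by (simp add: divide_inverse)
        finally show ?thesis .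
      qed
      then have "c *\<^sub>R Ma + d *\<^sub>R Mb \<le> Ms" using Ms unfolding is_inf_of_def by blast
      then have "(1/2) *\<^sub>R (c *\<^sub>R Ma + d *\<^sub>R Mb) \<le> (1/2) *\<^sub>R Ms" by (rule scaleR_left_mono) simp
      then show ?thesis unfolding p_def q_def s_def by (simp add: scaleR_add_right)
    qed
    finally show "e \<le> s" .
  next
    fix w assume hw: "\<forall>e\<in>S. e \<le> w"
    have "Ms \<le> w + w"
    proof (rule lemma_G[OF arch AB u Ms])
      fix th :: real assume th: "0 < th"
      have "inf (th *\<^sub>R A + th *\<^sub>R B) (inverse th *\<^sub>R u) \<le> w"
      proof (rule lemma_H[OF arch])
        show "0 \<le> th *\<^sub>R A" "0 \<le> th *\<^sub>R B" "0 \<le> inverse th *\<^sub>R u" using A B u th by (auto intro!: scaleR_nonneg_nonneg)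
        fix l :: real assume l0: "0 \<le> l" and l1: "l \<le> 1"
        define c where "c = sqrt l"
        define d where "d = sqrt (1 - l)"
        define t where "t = arccos c"
        have c0: "0 \<le> c" and d0: "0 \<le> d" unfolding c_def d_def using l0 l1 by simp_all
        have c1: "c \<le> 1" unfolding c_def using l1 by simp
        have cost: "cos t = c" unfolding t_def using c0 c1 by simp
        have sint: "sin t = d" proof -
          have "- 1 \<le> c" using c0 by simp
          then have "sin t = sqrt (1 - c^2)" unfolding t_def using c1 by (simp add: sin_arccos)
          then show ?thesis unfolding d_def c_def using l0 by simp
        qed
        have tS: "t \<in> {0..2*pi}" unfolding t_def using arccos_lbound[of c] arccos_ubound[of c] c0 c1 by auto
        have c2: "c^2 = l" and d2: "d^2 = 1 - l" unfolding c_def d_def using l0 l1 by simp_all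
        have "inf (th *\<^sub>R A) (l *\<^sub>R inverse th *\<^sub>R u) = inf (th *\<^sub>R A) ((c^2 / th) *\<^sub>R u)"
          unfolding c2 by (simp add: divide_inverse)
        also have "\<dots> \<le> c *\<^sub>R p" unfolding p_def by (rule LB[OF A u Ma c0 th])
        finally have h1: "inf (th *\<^sub>R A) (l *\<^sub>R inverse th *\<^sub>R u) \<le> c *\<^sub>R p" .
        have "inf (th *\<^sub>R B) ((1 - l) *\<^sub>R inverse th *\<^sub>R u) = inf (th *\<^sub>R B) ((d^2 / th) *\<^sub>R u)"
          unfolding d2 by (simp add: divide_inverse)
        also have "\<dots> \<le> d *\<^sub>R q" unfolding q_def by (rule LB[OF B u Mb d0 th])
        finally have h2: "inf (th *\<^sub>R B) ((1 - l) *\<^sub>R inverse th *\<^sub>R u) \<le> d *\<^sub>R q" .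
        have "cos t *\<^sub>R p + sin t *\<^sub>R q \<in> S" unfolding S_def using tS by blast
        then have "c *\<^sub>R p + d *\<^sub>R q \<le> w" using hw cost sint by auto
        then show "inf (th *\<^sub>R A) (l *\<^sub>R inverse th *\<^sub>R u) + inf (th *\<^sub>R B) ((1 - l) *\<^sub>R inverse th *\<^sub>R u) \<le> w"
          using h1 h2 by (meson add_mono order_trans)
      qed
      then show "inf (th *\<^sub>R (A + B)) (inverse th *\<^sub>R u) \<le> w" by (simp add: scaleR_add_right)
    qed
    then have "(1/2) *\<^sub>R Ms \<le> (1/2) *\<^sub>R (w + w)" by (rule scaleR_left_mono) simp
    then show "s \<le> w" unfolding s_def by (simp add: scaleR_2[symmetric])
  qed
  have "pyth_sum p q = s" unfolding pyth_sum_def S_def[symmetric]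
    by (rule the_equality) (auto intro: sup sup_unique[OF _ sup])
  then show ?thesis unfolding T_norm_def Txy A_def[symmetric] B_def[symmetric] pa pb ps p_def q_def s_def by simp
qed

end
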